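(* Let $(A,f)$ be a finite-dimensional quadratic Lie algebra over a field $\mathbb{K}$ of characteristic zero, let $d$ be an $f$-skew-symmetric derivation of $A$, and let $(A_b,f_b)$ be the one-dimensional double extension of $(A,f)$ by $(b,d)$. Then $A_b$ is reduced if and only if $d$ is not an inner derivation of $A$, $A_b^2=(\mathrm{im}\,d+A^2)\oplus\mathbb{K}\beta$, and $Z(A)\cap\ker d\subseteq \mathrm{im}\,d+A^2$.
   Context: A quadratic Lie algebra $(A,f)$ is a Lie algebra with a non-degenerate symmetric bilinear form $f$ satisfying $f([x,y],z)+f(y,[x,z])=0$. A derivation $d$ is $f$-skew-symmetric if $f(d(x),y)+f(x,d(y))=0$ for all $x,y$. The one-dimensional double extension of $(A,f)$ by $(b,d)$ is the vector space $A_b=\mathbb{K}b\oplus A\oplus\mathbb{K}\beta$ with bracket $[\lambda b+a+\mu\beta,\lambda' b+a'+\mu'\beta]=\lambda d(a')-\lambda' d(a)+[a,a']_A+f(d(a),a')\beta$ and symmetric form $f_b(\lambda b+a+\mu\beta,\lambda' b+a'+\mu'\beta)=\lambda\mu'+\lambda'\mu+f(a,a')$. A Lie algebra $L$ is reduced if $Z(L)\subseteq L^2=[L,L]$. *)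

theory Defs
  imports Complex_Main "HOL-Library.Product_Plus"
begin

definition lie_algebra :: "('k::field \<Rightarrow> 'a::ab_group_add \<Rightarrow> 'a) \<Rightarrow> ('a \<Rightarrow> 'a \<Rightarrow> 'a) \<Rightarrow> bool" where
  "lie_algebra s br \<longleftrightarrow> vector_space s
     \<and> (\<forall>x. Vector_Spaces.linear s s (br x))
     \<and> (\<forall>y. Vector_Spaces.linear s s (\<lambda>x. br x y))
     \<and> (\<forall>x. br x x = 0)
     \<and> (\<forall>x y z. br x (br y z) + br y (br z x) + br z (br x y) = 0)"

definition finite_dim :: "('k::field \<Rightarrow> 'a::ab_group_add \<Rightarrow> 'a) \<Rightarrow> bool" where
  "finite_dim s \<longleftrightarrow> (\<exists>B. finite_dimensional_vector_space s B)"

definition quadratic_lie_algebra ::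
  "('k::field \<Rightarrow> 'a::ab_group_add \<Rightarrow> 'a) \<Rightarrow> ('a \<Rightarrow> 'a \<Rightarrow> 'a) \<Rightarrow> ('a \<Rightarrow> 'a \<Rightarrow> 'k) \<Rightarrow> bool" where
  "quadratic_lie_algebra s br f \<longleftrightarrow> lie_algebra s br
     \<and> (\<forall>x. Vector_Spaces.linear s (*) (f x))
     \<and> (\<forall>x y. f x y = f y x)
     \<and> (\<forall>x. (\<forall>y. f x y = 0) \<longrightarrow> x = 0)
     \<and> (\<forall>x y z. f (br x y) z + f y (br x z) = 0)"

definition derivation :: "('k::field \<Rightarrow> 'a::ab_group_add \<Rightarrow> 'a) \<Rightarrow> ('a \<Rightarrow> 'a \<Rightarrow> 'a) \<Rightarrow> ('a \<Rightarrow> 'a) \<Rightarrow> bool" where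
  "derivation s br d \<longleftrightarrow> Vector_Spaces.linear s s d \<and> (\<forall>x y. d (br x y) = br (d x) y + br x (d y))"

definition skew_symmetric :: "('a \<Rightarrow> 'a \<Rightarrow> 'k::field) \<Rightarrow> ('a \<Rightarrow> 'a) \<Rightarrow> bool" where
  "skew_symmetric f d \<longleftrightarrow> (\<forall>x y. f (d x) y + f x (d y) = 0)"

definition inner_derivation :: "('a \<Rightarrow> 'a \<Rightarrow> 'a) \<Rightarrow> ('a \<Rightarrow> 'a) \<Rightarrow> bool" where
  "inner_derivation br d \<longleftrightarrow> (\<exists>a. d = br a)"

definition derived :: "('k::field \<Rightarrow> 'a::ab_group_add \<Rightarrow> 'a) \<Rightarrow> ('a \<Rightarrow> 'a \<Rightarrow> 'a) \<Rightarrow> 'a set" where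
  "derived s br = module.span s {br x y | x y. True}"

definition center :: "('a \<Rightarrow> 'a \<Rightarrow> 'a::zero) \<Rightarrow> 'a set" where
  "center br = {z. \<forall>x. br z x = 0}"

definition reduced :: "('k::field \<Rightarrow> 'a::ab_group_add \<Rightarrow> 'a) \<Rightarrow> ('a \<Rightarrow> 'a \<Rightarrow> 'a) \<Rightarrow> bool" where
  "reduced s br \<longleftrightarrow> center br \<subseteq> derived s br"

(* The one-dimensional double extension A_b = K b \<oplus> A \<oplus> K beta, with elements
   written as triples (lambda, a, mu) = lambda b + a + mu beta. *)
definition dext_scale :: "('k::field \<Rightarrow> 'a::ab_group_add \<Rightarrow> 'a) \<Rightarrow> 'k \<Rightarrow> 'k \<times> 'a \<times> 'k \<Rightarrow> 'k \<times> 'a \<times> 'k" where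
  "dext_scale s c = (\<lambda>(l, a, m). (c * l, s c a, c * m))"

definition dext_bracket ::
  "('k::field \<Rightarrow> 'a::ab_group_add \<Rightarrow> 'a) \<Rightarrow> ('a \<Rightarrow> 'a \<Rightarrow> 'a) \<Rightarrow> ('a \<Rightarrow> 'a \<Rightarrow> 'k) \<Rightarrow> ('a \<Rightarrow> 'a)
     \<Rightarrow> 'k \<times> 'a \<times> 'k \<Rightarrow> 'k \<times> 'a \<times> 'k \<Rightarrow> 'k \<times> 'a \<times> 'k" where
  "dext_bracket s br f d = (\<lambda>(l, a, m) (l', a', m').
      (0, s l (d a') - s l' (d a) + br a a', f (d a) a'))"

definition dext_form :: "('a \<Rightarrow> 'a \<Rightarrow> 'k::field) \<Rightarrow> 'k \<times> 'a \<times> 'k \<Rightarrow> 'k \<times> 'a \<times> 'k \<Rightarrow> 'k" where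
  "dext_form f = (\<lambda>(l, a, m) (l', a', m'). l * m' + l' * m + f a a')"

end

theory Submission
  imports Defs
begin

lemma dext_vs:
  assumes "vector_space s"
  shows "vector_space (dext_scale s)"
proof -
  interpret vector_space s by fact
  show ?thesis
    unfolding vector_space_def dext_scale_def
    by (auto simp: algebra_simps split: prod.splits)
qed

lemma dext_bracket_simp:
  "dext_bracket s br f d (l, a, m) (l', a', m') = (0, s l (d a') - s l' (d a) + br a a', f (d a) a')"
  by (simp add: dext_bracket_def)

lemma dext_scale_simp: "dext_scale s c (l, a, m) = (c * l, s c a, c * m)"
  by (simp add: dext_scale_def)

theorem corollary2p9:
  fixes s :: "'k::field_char_0 \<Rightarrow> 'a::ab_group_add \<Rightarrow> 'a"
    and br :: "'a \<Rightarrow> 'a \<Rightarrow> 'a"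
    and f :: "'a \<Rightarrow> 'a \<Rightarrow> 'k"
    and d :: "'a \<Rightarrow> 'a"
  assumes "quadratic_lie_algebra s br f"
    and "finite_dim s"
    and "derivation s br d"
    and "skew_symmetric f d"
  shows "reduced (dext_scale s) (dext_bracket s br f d) \<longleftrightarrow>
           (\<not> inner_derivation br d
            \<and> derived (dext_scale s) (dext_bracket s br f d)
                = {(0, a, m) | a m. a \<in> {u + v | u v. u \<in> range d \<and> v \<in> derived s br}}
            \<and> center br \<inter> {x. d x = 0} \<subseteq> {u + v | u v. u \<in> range d \<and> v \<in> derived s br})"
proof -
  have Q: "quadratic_lie_algebra s br f" by fact
  have LA: "lie_algebra s br" using Q by (simp add: quadratic_lie_algebra_def)
  have VS: "vector_space s" using LA by (simp add: lie_algebra_def)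
  interpret V: vector_space s by fact
  interpret VD: vector_space "dext_scale s" using dext_vs[OF VS] .
  have br1: "\<And>x y z. br x (y + z) = br x y + br x z" "\<And>x c y. br x (s c y) = s c (br x y)"
    using LA unfolding lie_algebra_def Vector_Spaces.linear_iff by auto
  have br2: "\<And>x y z. br (y + z) x = br y x + br z x" "\<And>x c y. br (s c y) x = s c (br y x)"
    using LA unfolding lie_algebra_def Vector_Spaces.linear_iff by auto
  have dl: "\<And>x y. d (x + y) = d x + d y" "\<And>c x. d (s c x) = s c (d x)"
    using assms(3) unfolding derivation_def Vector_Spaces.linear_iff by auto
  have fl: "\<And>x y z. f x (y + z) = f x y + f x z"
    using Q unfolding quadratic_lie_algebra_def Vector_Spaces.linear_iff by auto
  have fsym: "\<And>x y. f x y = f y x" using Q unfolding quadratic_lie_algebra_def by auto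
  have fnd: "\<And>x. (\<forall>y. f x y = 0) \<Longrightarrow> x = 0" using Q unfolding quadratic_lie_algebra_def by auto
  have d0: "d 0 = 0" using dl(1)[of 0 0] by simp
  have br0: "\<And>a. br 0 a = 0" using br2(1) by (metis add_cancel_right_right add_0)
  have f0: "\<And>a. f 0 a = 0"
  proof -
    fix a have "f a 0 = 0" using fl[of a 0 0] by simp
    thus "f 0 a = 0" using fsym by metis
  qed
  have dneg: "\<And>x. d (- x) = - d x" using dl(1) d0 by (metis add.right_inverse eq_neg_iff_add_eq_0)
  have brneg: "\<And>x y. br (- x) y = - br x y" using br2(1) br0 by (metis add.right_inverse eq_neg_iff_add_eq_0)
  have ddiff: "\<And>x y. d (x - y) = d x - d y" using dl(1) dneg by (metis diff_conv_add_uminus)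
  define B where "B = dext_bracket s br f d"
  define D where "D = derived (dext_scale s) B"
  define Dv where "Dv = derived s br"
  define W where "W = {u + v | u v. u \<in> range d \<and> v \<in> Dv}"
  define P where "P = {(0::'k, a, m::'k) | a m. a \<in> W}"
  have Bs: "\<And>l a m l' a' m'. B (l, a, m) (l', a', m') = (0, s l (d a') - s l' (d a) + br a a', f (d a) a')"
    by (simp add: B_def dext_bracket_simp)
  have DvS: "V.subspace Dv" unfolding Dv_def derived_def by simp
  have Wsub: "V.subspace W"
    unfolding V.subspace_def W_def
  proof (intro conjI allI ballI impI)
    show "0 \<in> {u + v |u v. u \<in> range d \<and> v \<in> Dv}"
      using d0 V.subspace_0[OF DvS] by (metis (mono_tags, lifting) add_0 mem_Collect_eq rangeI)
  next
    fix x y assume "x \<in> {u + v |u v. u \<in> range d \<and> v \<in> Dv}" "y \<in> {u + v |u v. u \<in> range d \<and> v \<in> Dv}"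
    then obtain u1 v1 u2 v2 where "x = d u1 + v1" "y = d u2 + v2" "v1 \<in> Dv" "v2 \<in> Dv" by blast
    then have "x + y = d (u1 + u2) + (v1 + v2)" "v1 + v2 \<in> Dv"
      using dl V.subspace_add[OF DvS] by (auto simp: algebra_simps)
    then show "x + y \<in> {u + v |u v. u \<in> range d \<and> v \<in> Dv}" by blast
  next
    fix c x assume "x \<in> {u + v |u v. u \<in> range d \<and> v \<in> Dv}"
    then obtain u1 v1 where "x = d u1 + v1" "v1 \<in> Dv" by blast
    then have "s c x = d (s c u1) + s c v1" "s c v1 \<in> Dv"
      using dl V.subspace_scale[OF DvS] by (auto simp: algebra_simps)
    then show "s c x \<in> {u + v |u v. u \<in> range d \<and> v \<in> Dv}" by blast
  qed
  have Psub: "VD.subspace P"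
    unfolding VD.subspace_def P_def
    using V.subspace_0[OF Wsub] V.subspace_add[OF Wsub] V.subspace_scale[OF Wsub]
    by (auto simp: dext_scale_simp zero_prod_def)
  have F1: "D \<subseteq> P"
    unfolding D_def derived_def
  proof (rule VD.span_minimal[OF _ Psub], rule subsetI)
    fix z assume "z \<in> {B x y |x y. True}"
    then obtain x y where zxy: "z = B x y" by blast
    obtain l a m l' a' m' where xy: "x = (l, a, m)" "y = (l', a', m')" by (cases x, cases y) auto
    have "s l (d a') - s l' (d a) = d (s l a' - s l' a)"
      using dl(2) ddiff by simp
    moreover have "br a a' \<in> Dv" unfolding Dv_def derived_def by (rule V.span_base) blast
    ultimately have "s l (d a') - s l' (d a) + br a a' \<in> W" unfolding W_def by blast
    then show "z \<in> P" unfolding zxy P_def xy Bs by blast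
  qed
  have F2: "\<And>a. (0, d a, 0) \<in> D"
  proof -
    fix a
    have "B (1, 0, 0) (0, a, 0) = (0, d a, 0)" by (simp add: Bs d0 br0 f0)
    then show "(0, d a, 0) \<in> D" unfolding D_def derived_def
      by (metis (mono_tags, lifting) VD.span_base mem_Collect_eq)
  qed
  have F3: "\<And>a a'. (0, br a a', f (d a) a') \<in> D"
  proof -
    fix a a'
    have "B (0, a, 0) (0, a', 0) = (0, br a a', f (d a) a')" by (simp add: Bs)
    then show "(0, br a a', f (d a) a') \<in> D" unfolding D_def derived_def
      by (metis (mono_tags, lifting) VD.span_base mem_Collect_eq)
  qed
  have DS: "VD.subspace D" unfolding D_def derived_def by simp
  have F4: "P \<subseteq> D" if beta: "(0, 0, 1) \<in> D"
  proof -
    have betac: "\<And>c. (0, 0, c) \<in> D"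
      using VD.subspace_scale[OF DS beta] by (simp add: dext_scale_simp)
    have "Dv \<subseteq> {v. (0, v, 0) \<in> D}"
      unfolding Dv_def derived_def
    proof (rule V.span_minimal)
      show "{br x y |x y. True} \<subseteq> {v. (0, v, 0) \<in> D}"
      proof clarify
        fix x y
        have "(0, br x y, f (d x) y) - (0, 0, f (d x) y) \<in> D"
          using VD.subspace_diff[OF DS F3 betac] .
        then show "(0, br x y, 0) \<in> D" by simp
      qed
      show "V.subspace {v. (0, v, 0) \<in> D}"
        unfolding V.subspace_def
      proof (intro conjI allI ballI impI)
        show "0 \<in> {v. (0, v, 0) \<in> D}"
          using VD.subspace_0[OF DS] by (simp add: zero_prod_def)
      next
        fix x y assume "x \<in> {v. (0, v, 0) \<in> D}" "y \<in> {v. (0, v, 0) \<in> D}"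
        then have "(0, x, 0) + (0, y, 0) \<in> D" using VD.subspace_add[OF DS] by blast
        then show "x + y \<in> {v. (0, v, 0) \<in> D}" by simp
      next
        fix c x assume "x \<in> {v. (0, v, 0) \<in> D}"
        then have "dext_scale s c (0, x, 0) \<in> D" using VD.subspace_scale[OF DS] by simp
        then show "s c x \<in> {v. (0, v, 0) \<in> D}" by (simp add: dext_scale_simp)
      qed
    qed
    show ?thesis unfolding P_def
    proof clarify
      fix a m assume "a \<in> W"
      then obtain u v where uv: "a = d u + v" "v \<in> Dv" unfolding W_def by blast
      have "(0, v, 0) \<in> D" using uv \<open>Dv \<subseteq> _\<close> by blast
      then have "(0, d u, 0) + (0, v, 0) + (0, 0, m) \<in> D"
        using F2 betac VD.subspace_add[OF DS] by blast
      then show "(0, a, m) \<in> D" using uv by simp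
    qed
  qed
  have F5: "(0, 0, 1) \<in> center B"
    unfolding center_def
  proof (intro CollectI allI)
    fix x :: "'k \<times> 'a \<times> 'k" obtain l a m where "x = (l, a, m)" by (cases x) auto
    then show "B (0, 0, 1) x = 0" by (simp add: Bs d0 br0 f0 zero_prod_def)
  qed
  have F6: "(0, a, m) \<in> center B" if "a \<in> center br" "d a = 0" for a m
    unfolding center_def
  proof (intro CollectI allI)
    fix x :: "'k \<times> 'a \<times> 'k" obtain l' a' m' where "x = (l', a', m')" by (cases x) auto
    then show "B (0, a, m) x = 0" using that by (simp add: Bs d0 f0 zero_prod_def center_def)
  qed
  have F7: "\<exists>a m. z = (0, a, m) \<and> a \<in> center br \<and> d a = 0"
    if zc: "z \<in> center B" and ni: "\<not> inner_derivation br d" for z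
  proof -
    obtain l a m where z: "z = (l, a, m)" by (cases z) auto
    have eq: "\<And>l' a'. s l (d a') - s l' (d a) + br a a' = 0 \<and> f (d a) a' = 0"
    proof -
      fix l' a'
      have "B z (l', a', 0) = 0" using zc unfolding center_def by blast
      then show "s l (d a') - s l' (d a) + br a a' = 0 \<and> f (d a) a' = 0"
        by (simp add: z Bs zero_prod_def)
    qed
    have da: "d a = 0" using eq fnd by blast
    have e2: "\<And>a'. s l (d a') + br a a' = 0" using eq[where l'=0] da by simp
    have l0: "l = 0"
    proof (rule ccontr)
      assume "l \<noteq> 0"
      have "d = br (- s (inverse l) a)"
      proof
        fix a'
        have "s (inverse l) (s l (d a') + br a a') = 0" using e2 by simp
        then have "d a' + s (inverse l) (br a a') = 0"
          using \<open>l \<noteq> 0\<close> by (simp add: V.scale_right_distrib)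
        then show "d a' = br (- s (inverse l) a) a'"
          by (simp add: brneg br2(2) eq_neg_iff_add_eq_0)
      qed
      then show False using ni unfolding inner_derivation_def by blast
    qed
    have "a \<in> center br" using e2 l0 unfolding center_def by simp
    then show ?thesis using z l0 da by blast
  qed
  have F8: "\<exists>z \<in> center B. fst z \<noteq> 0" if inn: "inner_derivation br d"
  proof -
    obtain c where c: "d = br c" using inn unfolding inner_derivation_def by blast
    have "br c c = 0" using LA unfolding lie_algebra_def by blast
    then have dc: "d (- c) = 0" using c dneg by simp
    have "(1, - c, 0) \<in> center B"
      unfolding center_def
    proof (intro CollectI allI)
      fix x :: "'k \<times> 'a \<times> 'k" obtain l' a' m' where "x = (l', a', m')" by (cases x) auto
      then show "B (1, - c, 0) x = 0" using dc by (simp add: Bs f0 zero_prod_def brneg c)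
    qed
    then show ?thesis by force
  qed
  have "reduced (dext_scale s) B \<longleftrightarrow>
        (\<not> inner_derivation br d \<and> D = P \<and> center br \<inter> {x. d x = 0} \<subseteq> W)"
  proof
    assume R: "reduced (dext_scale s) B"
    then have CD: "center B \<subseteq> D" unfolding reduced_def D_def by simp
    have ni: "\<not> inner_derivation br d"
    proof
      assume "inner_derivation br d"
      then obtain z where "z \<in> center B" "fst z \<noteq> 0" using F8 by blast
      then show False using CD F1 unfolding P_def by auto
    qed
    have DP: "D = P" using F1 F4 F5 CD by blast
    have "center br \<inter> {x. d x = 0} \<subseteq> W"
    proof
      fix a assume "a \<in> center br \<inter> {x. d x = 0}"
      then have "(0, a, 0) \<in> D" using F6 CD by blast
      then show "a \<in> W" using F1 unfolding P_def by auto
    qed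
    then show "\<not> inner_derivation br d \<and> D = P \<and> center br \<inter> {x. d x = 0} \<subseteq> W"
      using ni DP by blast
  next
    assume H: "\<not> inner_derivation br d \<and> D = P \<and> center br \<inter> {x. d x = 0} \<subseteq> W"
    show "reduced (dext_scale s) B"
      unfolding reduced_def D_def[symmetric]
    proof
      fix z assume "z \<in> center B"
      then obtain a m where "z = (0, a, m)" "a \<in> center br" "d a = 0" using F7 H by blast
      then show "z \<in> D" using H unfolding P_def by blast
    qed
  qed
  then show ?thesis unfolding B_def D_def P_def W_def Dv_def .
qed

end
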